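(* Let $\mathbb{K}$ be a field and let $P$ be a nonempty set of primes. Let $\mathcal F=\{f_n(q)\}_{n=1}^\infty$ be a solution of $f_{mn}(q)=f_m(q)f_n(q^m)$ (for all $m,n\in\mathbb N$) in $\mathbb{K}[q]$ with $\mathrm{supp}(\mathcal F)=S(P)$. Then there exist a set $P_H\supseteq P$ of primes and a solution $\mathcal H$ of the same functional equation with $\mathrm{supp}(\mathcal H)=S(P_H)$ such that the restriction of $\mathcal H$ to $S(P)$ equals $\mathcal F$ and $\mathcal H$ is maximal.
   Context: $\mathbb N=\{1,2,3,\dots\}$. $\mathrm{supp}(\mathcal F)=\{n\in\mathbb N: f_n(q)\ne0\}$. For a set $P$ of primes, $S(P)$ is the multiplicative semigroup of positive integers generated by $P$ (including $1$). If $\mathcal G=\{g_n\}$ is a solution with $\mathrm{supp}(\mathcal G)=S(P_G)$ and $P\subseteq P_G$ is nonempty, the restriction of $\mathcal G$ to $S(P)$ is the sequence $\{f_n\}$ with $f_n=g_n$ for $n\in S(P)$ and $f_n=0$ for $n\notin S(P)$; it is again a solution. A solution $\mathcal H$ with support $S(P_H)$ is called maximal if it is not the restriction of any solution $\mathcal G$ with support $S(P_G)$, $P_G\supsetneq P_H$, to $S(P_H)$. *)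

theory Defs
  imports "HOL-Computational_Algebra.Computational_Algebra"
begin

text \<open>Sequences f_1, f_2, ... of polynomials are modelled as functions nat => 'a poly;
  the value at index 0 is irrelevant and ignored everywhere.\<close>

definition is_solution :: "(nat \<Rightarrow> 'a::field poly) \<Rightarrow> bool" where
  "is_solution f \<longleftrightarrow>
     (\<forall>m n. m \<ge> 1 \<longrightarrow> n \<ge> 1 \<longrightarrow> f (m * n) = f m * pcompose (f n) (monom 1 m))"

definition supp :: "(nat \<Rightarrow> 'a::zero) \<Rightarrow> nat set" where
  "supp f = {n. n \<ge> 1 \<and> f n \<noteq> 0}"

inductive_set S :: "nat set \<Rightarrow> nat set" for P :: "nat set" where
  one: "1 \<in> S P"
| mult: "p \<in> P \<Longrightarrow> n \<in> S P \<Longrightarrow> p * n \<in> S P"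

definition prime_set :: "nat set \<Rightarrow> bool" where
  "prime_set P \<longleftrightarrow> (\<forall>p\<in>P. prime p)"

definition restrict_to :: "(nat \<Rightarrow> 'a::zero) \<Rightarrow> nat set \<Rightarrow> nat \<Rightarrow> 'a" where
  "restrict_to g P n = (if n \<in> S P then g n else 0)"

definition seq_eq :: "(nat \<Rightarrow> 'a) \<Rightarrow> (nat \<Rightarrow> 'a) \<Rightarrow> bool" where
  "seq_eq f g \<longleftrightarrow> (\<forall>n\<ge>1. f n = g n)"

definition maximal_solution :: "(nat \<Rightarrow> 'a::field poly) \<Rightarrow> nat set \<Rightarrow> bool" where
  "maximal_solution h PH \<longleftrightarrow>
     is_solution h \<and> prime_set PH \<and> supp h = S PH \<and>
     \<not> (\<exists>g PG. is_solution g \<and> prime_set PG \<and> supp g = S PG \<and> PH \<subset> PG \<and>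
              seq_eq (restrict_to g PH) h)"

end

theory Submission
  imports Defs
begin

lemma S_one' [simp]: "Suc 0 \<in> S Q"
  using S.one by simp

lemma S_pos: "n \<in> S Q \<Longrightarrow> prime_set Q \<Longrightarrow> n \<ge> 1"
proof (induction rule: S.induct)
  case one
  then show ?case by simp
next
  case (mult p n)
  then have "p > 0" by (auto simp: prime_set_def prime_gt_0_nat)
  with mult show ?case by simp
qed

lemma S_mono: "n \<in> S Q \<Longrightarrow> Q \<subseteq> Q' \<Longrightarrow> n \<in> S Q'"
  by (induction rule: S.induct) (auto intro: S.intros)

lemma S_mult: "m \<in> S Q \<Longrightarrow> n \<in> S Q \<Longrightarrow> m * n \<in> S Q"
  by (induction rule: S.induct) (auto simp: mult.assoc intro: S.intros)

lemma S_gen: "p \<in> Q \<Longrightarrow> p \<in> S Q"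
  using S.mult[OF _ S.one, of p Q] by simp

lemma S_prime: "k \<in> S Q \<Longrightarrow> prime_set Q \<Longrightarrow> prime k \<Longrightarrow> k \<in> Q"
proof (induction rule: S.induct)
  case one
  then show ?case by simp
next
  case (mult p n)
  then have "prime p" by (auto simp: prime_set_def)
  then have "p \<noteq> 1" by auto
  with mult.prems(2) have "n = 1" using prime_product[of p n] by auto
  then show ?case using mult by simp
qed

lemma S_dvd: "k \<in> S Q \<Longrightarrow> prime_set Q \<Longrightarrow> k = m * n \<Longrightarrow> m \<in> S Q"
proof (induction arbitrary: m n rule: S.induct)
  case one
  then show ?case by (simp add: S.one)
next
  case (mult p k')
  then have pp: "prime p" by (auto simp: prime_set_def)
  have "p dvd m * n" using mult.prems(2) by (metis dvd_triv_left)
  then have "p dvd m \<or> p dvd n" using pp prime_dvd_mult_iff by blast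
  then show ?case
  proof
    assume "p dvd m"
    then obtain m' where m': "m = p * m'" by blast
    then have "k' = m' * n" using mult.prems pp by (simp add: mult.assoc)
    then have "m' \<in> S Q" using mult by blast
    then show ?thesis using m' mult.hyps(1) by (simp add: S.mult)
  next
    assume "p dvd n"
    then obtain n' where n': "n = p * n'" by blast
    then have "k' = m * n'" using mult.prems pp by (simp add: mult.commute mult.left_commute)
    then show ?thesis using mult by blast
  qed
qed

lemma S_union_chain:
  assumes "n \<in> S (\<Union>Qs)" "Qs \<noteq> {}"
    and ch: "\<And>Q1 Q2. Q1 \<in> Qs \<Longrightarrow> Q2 \<in> Qs \<Longrightarrow> S Q1 \<subseteq> S Q2 \<or> S Q2 \<subseteq> S Q1"
  shows "\<exists>Q\<in>Qs. n \<in> S Q"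
  using assms(1)
proof (induction rule: S.induct)
  case one
  then show ?case using assms(2) by (auto intro: S.one)
next
  case (mult p n)
  then obtain Q1 Q2 where q: "Q1 \<in> Qs" "p \<in> Q1" "Q2 \<in> Qs" "n \<in> S Q2" by auto
  then have "p \<in> S Q1" by (simp add: S_gen)
  from ch[OF q(1) q(3)] show ?case
  proof
    assume "S Q1 \<subseteq> S Q2"
    then show ?thesis using q \<open>p \<in> S Q1\<close> S_mult by blast
  next
    assume "S Q2 \<subseteq> S Q1"
    then show ?thesis using q \<open>p \<in> S Q1\<close> S_mult by blast
  qed
qed

definition graph :: "nat set \<Rightarrow> (nat \<Rightarrow> 'a) \<Rightarrow> (nat \<times> 'a) set" where
  "graph Q g = {(n, g n) | n. n \<in> S Q}"

lemma graph_fst: "fst ` graph Q g = S Q"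
  unfolding graph_def by force

theorem mainTheorem8:
  fixes f :: "nat \<Rightarrow> 'a::field poly" and P :: "nat set"
  assumes "prime_set P" and "P \<noteq> {}"
    and "is_solution f" and "supp f = S P"
  shows "\<exists>PH (h :: nat \<Rightarrow> 'a poly). prime_set PH \<and> P \<subseteq> PH \<and> is_solution h \<and>
           supp h = S PH \<and> seq_eq (restrict_to h P) f \<and> maximal_solution h PH"
proof -
  define Valid where "Valid = (\<lambda>Q (g :: nat \<Rightarrow> 'a poly). prime_set Q \<and> P \<subseteq> Q \<and> is_solution g \<and>
     supp g = S Q \<and> seq_eq (restrict_to g P) f)"
  define A where "A = {graph Q g | Q g. Valid Q g}"
  have fP: "n \<ge> 1 \<Longrightarrow> n \<notin> S P \<Longrightarrow> f n = 0" for n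
    using assms(4) unfolding supp_def by auto
  have VP: "Valid P f"
    unfolding Valid_def using assms fP by (auto simp: seq_eq_def restrict_to_def)
  have "\<exists>U\<in>A. \<forall>X\<in>C. X \<subseteq> U" if C: "C \<in> chains A" for C
  proof (cases "C = {}")
    case True
    then show ?thesis using VP unfolding A_def by blast
  next
    case False
    define V where "V = {(Q, g). Valid Q g \<and> graph Q g \<in> C}"
    define QU where "QU = \<Union>(fst ` V)"
    define gU where "gU = (\<lambda>n. if n \<in> S QU then (SOME y. (n, y) \<in> \<Union>C) else 0)"
    have CA: "C \<subseteq> A" using C by (simp add: chains_def)
    have Vne: "V \<noteq> {}"
    proof -
      obtain X where "X \<in> C" using False by blast
      with CA obtain Q g where "Valid Q g" "X = graph Q g" unfolding A_def by blast
      then show ?thesis unfolding V_def using \<open>X \<in> C\<close> by blast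
    qed
    have inC: "\<exists>Q g. (Q, g) \<in> V \<and> X = graph Q g" if "X \<in> C" for X
    proof -
      from that CA obtain Q g where "Valid Q g" "X = graph Q g" unfolding A_def by blast
      then show ?thesis unfolding V_def using that by blast
    qed
    have QV: "Q \<subseteq> QU" if "(Q, g) \<in> V" for Q g
      unfolding QU_def using that by force
    have cmp: "graph Q1 g1 \<subseteq> graph Q2 g2 \<or> graph Q2 g2 \<subseteq> graph Q1 g1"
      if "(Q1, g1) \<in> V" "(Q2, g2) \<in> V" for Q1 g1 Q2 g2
      using that C unfolding V_def chains_def chain_subset_def by auto
    have agree: "gU n = g n" if "(Q, g) \<in> V" "n \<in> S Q" for Q g n
    proof -
      have "n \<in> S QU" using S_mono[OF that(2) QV[OF that(1)]] .
      have mem: "(n, g n) \<in> \<Union>C" using that unfolding V_def graph_def by blast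
      have uniq: "y = g n" if "(n, y) \<in> \<Union>C" for y
      proof -
        from that obtain X where "X \<in> C" "(n, y) \<in> X" by blast
        then obtain Q' g' where q: "(Q', g') \<in> V" "X = graph Q' g'" using inC by blast
        have "(n, y) \<in> graph Q' g'" "(n, g n) \<in> graph Q g"
          using q \<open>(n, y) \<in> X\<close> \<open>n \<in> S Q\<close> unfolding graph_def by auto
        with cmp[OF \<open>(Q, g) \<in> V\<close> q(1)] show ?thesis unfolding graph_def by auto
      qed
      have "(SOME y. (n, y) \<in> \<Union>C) = g n"
        using someI[of "\<lambda>y. (n, y) \<in> \<Union>C", OF mem] uniq by blast
      then show ?thesis unfolding gU_def using \<open>n \<in> S QU\<close> by simp
    qed
    have cover: "\<exists>Q g. (Q, g) \<in> V \<and> n \<in> S Q" if "n \<in> S QU" for n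
    proof -
      have "\<exists>Q\<in>fst ` V. n \<in> S Q"
      proof (rule S_union_chain)
        show "n \<in> S (\<Union>(fst ` V))" using that unfolding QU_def .
        show "fst ` V \<noteq> {}" using Vne by blast
        fix Q1 Q2 assume "Q1 \<in> fst ` V" "Q2 \<in> fst ` V"
        then obtain g1 g2 where "(Q1, g1) \<in> V" "(Q2, g2) \<in> V" by force
        from cmp[OF this] show "S Q1 \<subseteq> S Q2 \<or> S Q2 \<subseteq> S Q1"
          using graph_fst[of Q1 g1] graph_fst[of Q2 g2] by (metis image_mono)
      qed
      then show ?thesis by force
    qed
    have Vvalid: "Valid Q g" if "(Q, g) \<in> V" for Q g
      using that unfolding V_def by simp
    have pQU: "prime_set QU"
      unfolding QU_def prime_set_def using Vvalid unfolding Valid_def prime_set_def by force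
    have PQU: "P \<subseteq> QU"
    proof -
      obtain Q g where qg: "(Q, g) \<in> V" using Vne by auto
      then have "P \<subseteq> Q" using Vvalid[OF qg] unfolding Valid_def by blast
      then show ?thesis using QV[OF qg] by blast
    qed
    have supp: "supp gU = S QU"
    proof
      show "supp gU \<subseteq> S QU" unfolding supp_def gU_def by auto
      show "S QU \<subseteq> supp gU"
      proof
        fix n assume n: "n \<in> S QU"
        then obtain Q g where qg: "(Q, g) \<in> V" "n \<in> S Q" using cover by blast
        then have "g n \<noteq> 0" using Vvalid[OF qg(1)] unfolding Valid_def supp_def by auto
        then show "n \<in> supp gU" using agree[OF qg] S_pos[OF n pQU] unfolding supp_def by simp
      qed
    qed
    have zero: "n \<notin> S QU \<Longrightarrow> gU n = 0" for n unfolding gU_def by simp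
    have sol: "is_solution gU"
      unfolding is_solution_def
    proof (intro allI impI)
      fix m n :: nat assume mn: "m \<ge> 1" "n \<ge> 1"
      show "gU (m * n) = gU m * pcompose (gU n) (monom 1 m)"
      proof (cases "m * n \<in> S QU")
        case True
        then obtain Q g where qg: "(Q, g) \<in> V" "m * n \<in> S Q" using cover by blast
        have vq: "Valid Q g" using Vvalid[OF qg(1)] .
        then have pq: "prime_set Q" and sq: "is_solution g" unfolding Valid_def by auto
        have "m \<in> S Q" using S_dvd[OF qg(2) pq refl] .
        moreover have "n * m \<in> S Q" using qg(2) by (simp only: mult.commute)
        then have "n \<in> S Q" using S_dvd[OF _ pq refl] by blast
        ultimately have e: "gU m = g m" "gU n = g n" "gU (m * n) = g (m * n)"
          using agree[OF qg(1)] qg(2) by auto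
        have "g (m * n) = g m * pcompose (g n) (monom 1 m)"
          using sq mn unfolding is_solution_def by blast
        then show ?thesis unfolding e .
      next
        case False
        then have "m \<notin> S QU \<or> n \<notin> S QU" using S_mult by blast
        then show ?thesis
        proof
          assume "m \<notin> S QU"
          then show ?thesis using False zero by simp
        next
          assume "n \<notin> S QU"
          then have "gU n = 0" using zero by blast
          moreover have "gU (m * n) = 0" using False zero by blast
          ultimately show ?thesis by simp
        qed
      qed
    qed
    have restr: "seq_eq (restrict_to gU P) f"
      unfolding seq_eq_def
    proof (intro allI impI)
      fix n :: nat assume n: "n \<ge> 1"
      show "restrict_to gU P n = f n"
      proof (cases "n \<in> S P")
        case True
        obtain Q g where qg: "(Q, g) \<in> V" using Vne by auto
        have vq: "Valid Q g" using Vvalid[OF qg] .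
        then have "n \<in> S Q" using S_mono[OF True] unfolding Valid_def by blast
        then have "gU n = g n" using agree[OF qg] by simp
        moreover have "restrict_to g P n = f n" using vq n unfolding Valid_def seq_eq_def by blast
        ultimately show ?thesis using True unfolding restrict_to_def by simp
      next
        case False
        then show ?thesis using fP[OF n] unfolding restrict_to_def by simp
      qed
    qed
    have "Valid QU gU" unfolding Valid_def using pQU PQU sol supp restr by blast
    then have "graph QU gU \<in> A" unfolding A_def by blast
    moreover have "\<forall>X\<in>C. X \<subseteq> graph QU gU"
    proof
      fix X assume "X \<in> C"
      then obtain Q g where qg: "(Q, g) \<in> V" "X = graph Q g" using inC by blast
      show "X \<subseteq> graph QU gU"
      proof
        fix z assume "z \<in> X"
        then obtain n where n: "n \<in> S Q" "z = (n, g n)" unfolding qg(2) graph_def by blast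
        have "n \<in> S QU" using S_mono[OF n(1) QV[OF qg(1)]] .
        moreover have "gU n = g n" using agree[OF qg(1) n(1)] .
        ultimately show "z \<in> graph QU gU" unfolding graph_def using n(2) by auto
      qed
    qed
    ultimately show ?thesis by blast
  qed
  then obtain M where M: "M \<in> A" "\<forall>X\<in>A. M \<subseteq> X \<longrightarrow> X = M"
    using Zorn_Lemma2[of A] by blast
  then obtain PH h where vh: "Valid PH h" and Mg: "M = graph PH h" unfolding A_def by blast
  have "maximal_solution h PH"
    unfolding maximal_solution_def
  proof (intro conjI notI)
    show "is_solution h" "prime_set PH" "supp h = S PH" using vh unfolding Valid_def by auto
    assume "\<exists>g PG. is_solution g \<and> prime_set PG \<and> supp g = S PG \<and> PH \<subset> PG \<and>
              seq_eq (restrict_to g PH) h"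
    then obtain g PG where g: "is_solution g" "prime_set PG" "supp g = S PG" "PH \<subset> PG"
      "seq_eq (restrict_to g PH) h" by blast
    have gh: "g n = h n" if "n \<in> S PH" for n
    proof -
      have "n \<ge> 1" using S_pos[OF that] vh unfolding Valid_def by blast
      then show ?thesis using g(5) that unfolding seq_eq_def restrict_to_def by force
    qed
    have PPH: "P \<subseteq> PH" using vh unfolding Valid_def by blast
    have "seq_eq (restrict_to g P) f"
      unfolding seq_eq_def
    proof (intro allI impI)
      fix n :: nat assume n: "n \<ge> 1"
      show "restrict_to g P n = f n"
      proof (cases "n \<in> S P")
        case True
        then have "n \<in> S PH" using S_mono PPH by blast
        then have "g n = h n" using gh by blast
        moreover have "restrict_to h P n = f n" using vh n unfolding Valid_def seq_eq_def by blast
        ultimately show ?thesis using True unfolding restrict_to_def by simp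
      next
        case False
        then show ?thesis using fP[OF n] unfolding restrict_to_def by simp
      qed
    qed
    then have "Valid PG g" unfolding Valid_def using g PPH by blast
    then have "graph PG g \<in> A" unfolding A_def by blast
    moreover have "M \<subseteq> graph PG g"
    proof
      fix z assume "z \<in> M"
      then obtain n where n: "n \<in> S PH" "z = (n, h n)" unfolding Mg graph_def by blast
      have "n \<in> S PG" using S_mono[OF n(1)] g(4) by blast
      then show "z \<in> graph PG g" unfolding graph_def using n gh by auto
    qed
    ultimately have "graph PG g = graph PH h" using M(2) Mg by simp
    then have "S PG = S PH" using graph_fst[of PG g] graph_fst[of PH h] by simp
    moreover obtain p where "p \<in> PG" "p \<notin> PH" using g(4) by blast
    moreover have "prime p" using g(2) \<open>p \<in> PG\<close> unfolding prime_set_def by blast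
    ultimately have "p \<in> S PH" using S_gen[of p PG] by simp
    moreover have "prime_set PH" using vh unfolding Valid_def by blast
    ultimately show False using S_prime[of p PH] \<open>prime p\<close> \<open>p \<notin> PH\<close> by blast
  qed
  then show ?thesis using vh unfolding Valid_def by blast
qed

end
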